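(* Let $s,t_1,\dots,t_n\in\mathbb{R}^2$ be distinct points, with $T=\{t_1,\dots,t_n\}$ ordered so that $D_{st_1}\le\dots\le D_{st_n}$. Let $P_s>0$, $N_0>0$, $\gamma\in(0,\infty)$, $P_r=\gamma P_s$, $\alpha\ge2$. Let $r^\circ$ be the point on the segment $[s,t_n]$ with $D_{sr^\circ}=\dfrac{D_{st_n}}{1+\sqrt[\alpha]{\gamma}}$, and let $C_s$ be the closed disk centered at $s$ of radius $D_{sr^\circ}$ and $C_r$ the closed disk centered at $r^\circ$ of radius $D_{r^\circ t_n}$. If $T\subseteq C_s\cup C_r$, then $r^\circ$ maximizes the multicast rate $R^*_{sT}(r)$ over all relay positions $r\in\mathbb{R}^2\setminus(\{s\}\cup T)$ (where $r^\circ$ itself is assumed not to lie in $T$).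
   Context: $D_{uv}$ is Euclidean distance. Achievable low-SNR broadcast-relay hypergraph model: for a relay position $r\notin\{s\}\cup T$, the node set is $\mathcal{N}=\{s,r\}\cup T$. The hyperarcs are $(s,J)$ for nonempty $J\subseteq\{r\}\cup T$ and $(r,J)$ for nonempty $J\subseteq T$. A power allocation assigns $P_{sJ}\ge0$, $P_{rJ}\ge0$ with $\sum_J P_{sJ}\le P_s$ and $\sum_J P_{rJ}\le P_r$; the capacity of hyperarc $(i,J)$ is $c_{iJ}=P_{iJ}/(N_0\max_{j\in J}D_{ij}^{\alpha})$. For a receiver $t\in T$, $R_{st}$ is the minimum, over all $S\subseteq\mathcal{N}$ with $s\in S$, $t\notin S$, of $\sum c_{iJ}$ over hyperarcs with $i\in S$ and $J\not\subseteq S$. The multicast rate is $R_{sT}=\min_{t\in T}R_{st}$, and $R^*_{sT}(r)$ is its maximum over all power allocations. *)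

theory Defs
  imports "HOL-Analysis.Analysis"
begin

definition hyperarcs :: "'a \<Rightarrow> 'a \<Rightarrow> 'a set \<Rightarrow> ('a \<times> 'a set) set" where
  "hyperarcs s r T =
     {(s, J) | J. J \<noteq> {} \<and> J \<subseteq> insert r T} \<union> {(r, J) | J. J \<noteq> {} \<and> J \<subseteq> T}"

definition power_allocs ::
  "'a \<Rightarrow> 'a \<Rightarrow> 'a set \<Rightarrow> real \<Rightarrow> real \<Rightarrow> (('a \<times> 'a set) \<Rightarrow> real) set" where
  "power_allocs s r T Ps Pr =
     {P. (\<forall>a\<in>hyperarcs s r T. P a \<ge> 0)
       \<and> (\<Sum>J\<in>{J. (s, J) \<in> hyperarcs s r T}. P (s, J)) \<le> Ps
       \<and> (\<Sum>J\<in>{J. (r, J) \<in> hyperarcs s r T}. P (r, J)) \<le> Pr}"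

definition capacity ::
  "real \<Rightarrow> real \<Rightarrow> (('a::metric_space \<times> 'a set) \<Rightarrow> real) \<Rightarrow> ('a \<times> 'a set) \<Rightarrow> real" where
  "capacity N0 \<alpha> P a =
     P a / (N0 * Max ((\<lambda>j. dist (fst a) j powr \<alpha>) ` snd a))"

definition cut_value ::
  "'a::metric_space \<Rightarrow> 'a \<Rightarrow> 'a set \<Rightarrow> real \<Rightarrow> real \<Rightarrow> (('a \<times> 'a set) \<Rightarrow> real) \<Rightarrow> 'a set \<Rightarrow> real" where
  "cut_value s r T N0 \<alpha> P S =
     (\<Sum>a\<in>{(i, J). (i, J) \<in> hyperarcs s r T \<and> i \<in> S \<and> \<not> J \<subseteq> S}. capacity N0 \<alpha> P a)"

definition rate_st ::
  "'a::metric_space \<Rightarrow> 'a \<Rightarrow> 'a set \<Rightarrow> real \<Rightarrow> real \<Rightarrow> (('a \<times> 'a set) \<Rightarrow> real) \<Rightarrow> 'a \<Rightarrow> real" where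
  "rate_st s r T N0 \<alpha> P t =
     Min (cut_value s r T N0 \<alpha> P ` {S. S \<subseteq> insert s (insert r T) \<and> s \<in> S \<and> t \<notin> S})"

definition rate_sT ::
  "'a::metric_space \<Rightarrow> 'a \<Rightarrow> 'a set \<Rightarrow> real \<Rightarrow> real \<Rightarrow> (('a \<times> 'a set) \<Rightarrow> real) \<Rightarrow> real" where
  "rate_sT s r T N0 \<alpha> P = Min (rate_st s r T N0 \<alpha> P ` T)"

definition opt_rate ::
  "'a::metric_space \<Rightarrow> 'a set \<Rightarrow> real \<Rightarrow> real \<Rightarrow> real \<Rightarrow> real \<Rightarrow> 'a \<Rightarrow> real" where
  "opt_rate s T Ps Pr N0 \<alpha> r =
     (SUP P\<in>power_allocs s r T Ps Pr. rate_sT s r T N0 \<alpha> P)"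

end

theory Submission
  imports Defs
begin

lemma incr_convex:
  fixes a b c \<alpha> :: real
  assumes "\<alpha> \<ge> 1" "0 < c" "c \<le> a" "0 \<le> b"
  shows "(c+b) powr \<alpha> - c powr \<alpha> \<le> (a+b) powr \<alpha> - a powr \<alpha>"
proof (cases "b = 0 \<or> c = a")
  case True then show ?thesis by auto
next
  case False
  then have cb: "c < a" "0 < b" using assms by auto
  define \<theta> where "\<theta> = b / (a+b-c)"
  have t0: "0 \<le> \<theta>" "\<theta> \<le> 1" using cb unfolding \<theta>_def by (auto simp: field_simps)
  have cv: "convex_on {0<..} (\<lambda>x::real. x powr \<alpha>)" using powr_convex assms(1) by blast
  have d: "a+b-c \<noteq> 0" using cb by simp
  have h: "\<theta>*(a+b-c) = b" using d unfolding \<theta>_def by simp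
  have e1: "a = (1 - (1-\<theta>)) *\<^sub>R c + (1-\<theta>) *\<^sub>R (a+b)" using h by (simp add: algebra_simps)
  have e2: "c + b = (1 - \<theta>) *\<^sub>R c + \<theta> *\<^sub>R (a+b)" using h by (simp add: algebra_simps)
  have i1: "a powr \<alpha> \<le> (1 - (1-\<theta>)) * c powr \<alpha> + (1-\<theta>) * (a+b) powr \<alpha>"
    using convex_onD[OF cv, of "1-\<theta>" c "a+b"] t0 assms cb e1 by auto
  have i2: "(c+b) powr \<alpha> \<le> (1 - \<theta>) * c powr \<alpha> + \<theta> * (a+b) powr \<alpha>"
    using convex_onD[OF cv, of "\<theta>" c "a+b"] t0 assms cb e2 by auto
  show ?thesis using i1 i2 by (simp add: algebra_simps)
qed

lemma norm_ineq:
  fixes x y g \<alpha> :: real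
  assumes "\<alpha> \<ge> 1" "0 < x" "x * (1+g) < 1" "y \<ge> 1 - x" "g > 0"
  shows "1 + (1 - x powr \<alpha>) * g powr \<alpha> / y powr \<alpha> \<le> (1+g) powr \<alpha>"
proof -
  define q where "q = 1 - x"
  have x1: "x < 1" proof -
    have "g*x > 0" using assms by simp
    moreover have "x + g*x < 1" using assms(3) by (simp add: algebra_simps)
    ultimately show ?thesis by linarith
  qed
  have q: "0 < q" "g*x \<le> q" using assms x1 unfolding q_def by (auto simp: algebra_simps)
  have m: "(g*x + g*q) powr \<alpha> - (g*x) powr \<alpha> \<le> (q + g*q) powr \<alpha> - q powr \<alpha>"
    using incr_convex[of \<alpha> "g*x" q "g*q"] assms q by auto
  have eq1: "g*x + g*q = g" "q + g*q = (1+g)*q" unfolding q_def by (simp_all add: algebra_simps)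
  have eq2: "(g*x) powr \<alpha> = g powr \<alpha> * x powr \<alpha>" "((1+g)*q) powr \<alpha> = (1+g) powr \<alpha> * q powr \<alpha>"
    using assms q by (simp_all add: powr_mult)
  have "g powr \<alpha> - g powr \<alpha> * x powr \<alpha> \<le> (1+g) powr \<alpha> * q powr \<alpha> - q powr \<alpha>"
    using m unfolding eq1 eq2 .
  then have k: "g powr \<alpha> * (1 - x powr \<alpha>) \<le> ((1+g) powr \<alpha> - 1) * q powr \<alpha>"
    by (simp add: right_diff_distrib left_diff_distrib)
  have xa: "x powr \<alpha> \<le> 1" using x1 assms by (simp add: powr_le1)
  have qy: "q powr \<alpha> \<le> y powr \<alpha>" using assms q by (intro powr_mono2) (auto simp: q_def)
  have qp: "q powr \<alpha> > 0" using q by simp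
  have "(1 - x powr \<alpha>) * g powr \<alpha> / y powr \<alpha> \<le> (1 - x powr \<alpha>) * g powr \<alpha> / q powr \<alpha>"
    using xa qy qp by (intro divide_left_mono mult_nonneg_nonneg mult_pos_pos) auto
  also have "\<dots> \<le> (1+g) powr \<alpha> - 1" using k qp by (simp add: divide_le_eq mult.commute)
  finally show ?thesis by simp
qed

lemma hyperarcs_finite: "finite T \<Longrightarrow> finite (hyperarcs s r T)"
proof -
  assume "finite T"
  have "hyperarcs s r T \<subseteq> {s, r} \<times> Pow (insert r T)" unfolding hyperarcs_def by auto
  moreover have "finite ({s, r} \<times> Pow (insert r T))" using \<open>finite T\<close> by simp
  ultimately show ?thesis by (rule finite_subset)
qed

lemma cut_value_sum:
  assumes "finite T"
  shows "cut_value s r T N0 \<alpha> P S =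
    (\<Sum>a\<in>hyperarcs s r T. if fst a \<in> S \<and> \<not> snd a \<subseteq> S then capacity N0 \<alpha> P a else 0)"
proof -
  have "{(i, J). (i, J) \<in> hyperarcs s r T \<and> i \<in> S \<and> \<not> J \<subseteq> S} =
        {a \<in> hyperarcs s r T. fst a \<in> S \<and> \<not> snd a \<subseteq> S}" by auto
  then show ?thesis unfolding cut_value_def
    using sum.inter_filter[OF hyperarcs_finite[OF assms]] by simp
qed

lemma capacity_nonneg:
  assumes "finite J" "J \<noteq> {}" "P (i, J) \<ge> 0" "N0 > 0"
  shows "capacity N0 \<alpha> P (i, J) \<ge> 0"
proof -
  obtain j where j: "j \<in> J" using assms by auto
  have "Max ((\<lambda>j. dist i j powr \<alpha>) ` J) \<ge> dist i j powr \<alpha>"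
    using assms j by (intro Max_ge) auto
  then have "Max ((\<lambda>j. dist i j powr \<alpha>) ` J) \<ge> 0" by (smt (verit) powr_ge_zero)
  then show ?thesis unfolding capacity_def using assms by simp
qed

lemma capacity_le:
  assumes "finite J" "j \<in> J" "dist i j > 0" "P (i, J) \<ge> 0" "N0 > 0"
  shows "capacity N0 \<alpha> P (i, J) \<le> P (i, J) / (N0 * dist i j powr \<alpha>)"
proof -
  have M: "Max ((\<lambda>j. dist i j powr \<alpha>) ` J) \<ge> dist i j powr \<alpha>"
    using assms by (intro Max_ge) auto
  have p: "dist i j powr \<alpha> > 0" using assms by simp
  have Mp: "Max ((\<lambda>j. dist i j powr \<alpha>) ` J) > 0" using M p by linarith
  have "P (i, J) / (N0 * Max ((\<lambda>j. dist i j powr \<alpha>) ` J)) \<le> P (i, J) / (N0 * dist i j powr \<alpha>)"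
    using M p Mp assms(4,5) by (intro divide_left_mono mult_left_mono mult_pos_pos) auto
  then show ?thesis unfolding capacity_def by simp
qed

lemma capacity_ge:
  assumes "finite J" "J \<noteq> {}" "\<forall>j\<in>J. 0 < dist i j \<and> dist i j \<le> d" "P (i, J) \<ge> 0" "N0 > 0"
    "\<alpha> \<ge> 0"
  shows "capacity N0 \<alpha> P (i, J) \<ge> P (i, J) / (N0 * d powr \<alpha>)"
proof -
  obtain j where j: "j \<in> J" using assms by auto
  have M1: "Max ((\<lambda>j. dist i j powr \<alpha>) ` J) \<le> d powr \<alpha>"
    using assms by (auto simp: Max_le_iff intro: powr_mono2)
  have M2: "Max ((\<lambda>j. dist i j powr \<alpha>) ` J) \<ge> dist i j powr \<alpha>"
    using assms j by (intro Max_ge) auto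
  have p: "dist i j powr \<alpha> > 0" using assms j by simp
  have Mp: "Max ((\<lambda>j. dist i j powr \<alpha>) ` J) > 0" using M2 p by linarith
  have "P (i, J) / (N0 * d powr \<alpha>) \<le> P (i, J) / (N0 * Max ((\<lambda>j. dist i j powr \<alpha>) ` J))"
    using M1 Mp assms(4,5) by (intro divide_left_mono mult_left_mono mult_pos_pos) auto
  then show ?thesis unfolding capacity_def by simp
qed

lemma hyperarcs_sum:
  assumes "s \<noteq> r" "finite T"
  shows "(\<Sum>a\<in>hyperarcs s r T. f a) =
    (\<Sum>J\<in>{J. (s, J) \<in> hyperarcs s r T}. f (s, J)) + (\<Sum>J\<in>{J. (r, J) \<in> hyperarcs s r T}. f (r, J))"
proof -
  have e: "hyperarcs s r T = Pair s ` {J. (s, J) \<in> hyperarcs s r T} \<union> Pair r ` {J. (r, J) \<in> hyperarcs s r T}"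
    unfolding hyperarcs_def by auto
  have fin: "finite (hyperarcs s r T)" using assms(2) by (rule hyperarcs_finite)
  have f1: "finite {J. (s, J) \<in> hyperarcs s r T}" 
    by (rule finite_imageD[where f="Pair s"]) (auto intro: finite_subset[OF _ fin] simp: inj_on_def)
  have f2: "finite {J. (r, J) \<in> hyperarcs s r T}" 
    by (rule finite_imageD[where f="Pair r"]) (auto intro: finite_subset[OF _ fin] simp: inj_on_def)
  have "(\<Sum>a\<in>hyperarcs s r T. f a) = sum f (Pair s ` {J. (s, J) \<in> hyperarcs s r T}) + sum f (Pair r ` {J. (r, J) \<in> hyperarcs s r T})"
    by (subst e, rule sum.union_disjoint) (use f1 f2 assms in auto)
  also have "\<dots> = (\<Sum>J\<in>{J. (s, J) \<in> hyperarcs s r T}. f (s, J)) + (\<Sum>J\<in>{J. (r, J) \<in> hyperarcs s r T}. f (r, J))"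
    by (subst sum.reindex, simp add: inj_on_def, subst sum.reindex, simp add: inj_on_def) simp
  finally show ?thesis .
qed

lemma upper_bound:
  fixes s r t :: "'a::metric_space"
  assumes finT: "finite T" and tT: "t \<in> T" and rN: "r \<notin> insert s T" and sT: "s \<notin> T"
    and N0: "N0 > 0" and P: "P \<in> power_allocs s r T Ps Pr" and l: "0 \<le> lm" "lm \<le> 1"
  shows "rate_sT s r T N0 \<alpha> P \<le>
    (max (1 / dist s t powr \<alpha>) ((1-lm) / dist s r powr \<alpha>) * Ps + lm / dist r t powr \<alpha> * Pr) / N0"
proof -
  define N where "N = insert s (insert r T)"
  define A where "A = N - {t}"
  define B where "B = insert s T - {t}"
  define H where "H = hyperarcs s r T"
  define cap where "cap = capacity N0 \<alpha> P"
  define Ms where "Ms = max (1 / dist s t powr \<alpha>) ((1-lm) / dist s r powr \<alpha>)"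
  define b where "b = 1 / dist r t powr \<alpha>"
  define w where "w a = (if fst a = s then Ms / N0 else lm * b / N0)" for a :: "'a \<times> 'a set"
  have sr: "s \<noteq> r" and st: "s \<noteq> t" and rt: "r \<noteq> t" using rN sT tT by auto
  have Pnn: "\<And>a. a \<in> H \<Longrightarrow> P a \<ge> 0" using P unfolding power_allocs_def H_def by auto
  have Psum: "(\<Sum>J\<in>{J. (s, J) \<in> H}. P (s, J)) \<le> Ps" "(\<Sum>J\<in>{J. (r, J) \<in> H}. P (r, J)) \<le> Pr"
    using P unfolding power_allocs_def H_def by auto
  have cuts_fin: "finite {S. S \<subseteq> N \<and> s \<in> S \<and> t \<notin> S}"
    by (rule finite_subset[of _ "Pow N"]) (auto simp: N_def finT)
  have r1: "rate_sT s r T N0 \<alpha> P \<le> rate_st s r T N0 \<alpha> P t"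
    unfolding rate_sT_def by (rule Min_le) (use finT tT in auto)
  have r2: "rate_st s r T N0 \<alpha> P t \<le> cut_value s r T N0 \<alpha> P A"
    unfolding rate_st_def by (rule Min_le) (use cuts_fin st in \<open>auto simp: A_def N_def\<close>)
  have r3: "rate_st s r T N0 \<alpha> P t \<le> cut_value s r T N0 \<alpha> P B"
    unfolding rate_st_def by (rule Min_le) (use cuts_fin st in \<open>auto simp: B_def N_def\<close>)
  have "rate_sT s r T N0 \<alpha> P \<le> lm * cut_value s r T N0 \<alpha> P A + (1 - lm) * cut_value s r T N0 \<alpha> P B"
  proof -
    have "lm * rate_sT s r T N0 \<alpha> P \<le> lm * cut_value s r T N0 \<alpha> P A"
      using r1 r2 l by (intro mult_left_mono) auto
    moreover have "(1-lm) * rate_sT s r T N0 \<alpha> P \<le> (1-lm) * cut_value s r T N0 \<alpha> P B"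
      using r1 r3 l by (intro mult_left_mono) auto
    ultimately show ?thesis by (simp add: algebra_simps)
  qed
  also have "lm * cut_value s r T N0 \<alpha> P A + (1 - lm) * cut_value s r T N0 \<alpha> P B =
      (\<Sum>a\<in>H. lm * (if fst a \<in> A \<and> \<not> snd a \<subseteq> A then cap a else 0)
              + (1 - lm) * (if fst a \<in> B \<and> \<not> snd a \<subseteq> B then cap a else 0))"
    unfolding cut_value_sum[OF finT] H_def cap_def by (simp add: sum.distrib sum_distrib_left)
  also have "\<dots> \<le> (\<Sum>a\<in>H. w a * P a)"
  proof (rule sum_mono)
    fix a assume aH: "a \<in> H"
    obtain i J where a: "a = (i, J)" by (cases a)
    have Jne: "J \<noteq> {}" and finJ: "finite J" and Pa: "P (i, J) \<ge> 0"
      using aH Pnn[OF aH] finite_subset[of J "insert r T"] finT unfolding a H_def hyperarcs_def by auto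
    have capnn: "cap (i, J) \<ge> 0" unfolding cap_def using capacity_nonneg[of J P i N0 \<alpha>, OF finJ Jne Pa N0] .
    have Ms1: "1 / dist s t powr \<alpha> \<le> Ms" and Ms2: "(1-lm) / dist s r powr \<alpha> \<le> Ms"
      unfolding Ms_def by auto
    have Msnn: "Ms \<ge> 0" using Ms1 by (smt (verit) divide_nonneg_nonneg powr_ge_zero)
    have bnn: "b \<ge> 0" unfolding b_def by simp
    show "lm * (if fst a \<in> A \<and> \<not> snd a \<subseteq> A then cap a else 0)
              + (1 - lm) * (if fst a \<in> B \<and> \<not> snd a \<subseteq> B then cap a else 0) \<le> w a * P a"
    proof (cases "i = s")
      case True
      then have JS: "J \<subseteq> insert r T" using aH sr unfolding a H_def hyperarcs_def by auto
      show ?thesis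
      proof (cases "t \<in> J")
        case tJ: True
        have "cap (i, J) \<le> P (i, J) / (N0 * dist s t powr \<alpha>)"
          unfolding cap_def True using capacity_le[OF finJ tJ _ _ N0, of s P \<alpha>] Pa st True by simp
        also have "\<dots> = (1 / dist s t powr \<alpha>) / N0 * P (i, J)" by simp
        also have "\<dots> \<le> Ms / N0 * P (i, J)"
          using Ms1 Pa N0 by (intro mult_right_mono divide_right_mono) auto
        finally have c: "cap (i, J) \<le> Ms / N0 * P (i, J)" .
        have "lm * (if fst a \<in> A \<and> \<not> snd a \<subseteq> A then cap a else 0) \<le> lm * cap a"
          using capnn l a by (intro mult_left_mono) auto
        moreover have "(1-lm) * (if fst a \<in> B \<and> \<not> snd a \<subseteq> B then cap a else 0) \<le> (1-lm) * cap a"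
          using capnn l a by (intro mult_left_mono) auto
        ultimately show ?thesis using c True unfolding a w_def by (simp add: algebra_simps)
      next
        case tJ: False
        have JA: "J \<subseteq> A" using JS tJ unfolding A_def N_def by auto
        show ?thesis
        proof (cases "r \<in> J")
          case rJ: True
          have "cap (i, J) \<le> P (i, J) / (N0 * dist s r powr \<alpha>)"
            unfolding cap_def True using capacity_le[OF finJ rJ _ _ N0, of s P \<alpha>] Pa sr True by simp
          then have "(1-lm) * cap (i, J) \<le> (1-lm) * (P (i, J) / (N0 * dist s r powr \<alpha>))"
            using l by (intro mult_left_mono) auto
          also have "\<dots> = ((1-lm) / dist s r powr \<alpha>) / N0 * P (i, J)" by simp
          also have "\<dots> \<le> Ms / N0 * P (i, J)"
            using Ms2 Pa N0 by (intro mult_right_mono divide_right_mono) auto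
          finally have c: "(1-lm) * cap (i, J) \<le> Ms / N0 * P (i, J)" .
          have "(1-lm) * (if fst a \<in> B \<and> \<not> snd a \<subseteq> B then cap a else 0) \<le> (1-lm) * cap a"
            using capnn l a by (intro mult_left_mono) auto
          then show ?thesis using c True JA unfolding a w_def by simp
        next
          case rJ: False
          have JB: "J \<subseteq> B" using JS tJ rJ unfolding B_def by auto
          have "0 \<le> w a * P a" unfolding a w_def using Msnn Pa N0 True by simp
          then show ?thesis using JA JB unfolding a by simp
        qed
      qed
    next
      case False
      then have ir: "i = r" and JT: "J \<subseteq> T" using aH sr unfolding a H_def hyperarcs_def by auto
      have nB: "i \<notin> B" using ir rN unfolding B_def by auto
      show ?thesis
      proof (cases "t \<in> J")
        case tJ: True
        have "cap (i, J) \<le> P (i, J) / (N0 * dist r t powr \<alpha>)"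
          unfolding cap_def ir using capacity_le[OF finJ tJ _ _ N0, of r P \<alpha>] Pa rt ir by simp
        then have "lm * cap (i, J) \<le> lm * (P (i, J) / (N0 * dist r t powr \<alpha>))"
          using l by (intro mult_left_mono) auto
        also have "\<dots> = lm * b / N0 * P (i, J)" unfolding b_def by simp
        finally have c: "lm * cap (i, J) \<le> lm * b / N0 * P (i, J)" .
        have "lm * (if fst a \<in> A \<and> \<not> snd a \<subseteq> A then cap a else 0) \<le> lm * cap a"
          using capnn l a by (intro mult_left_mono) auto
        then show ?thesis using c False nB unfolding a w_def by simp
      next
        case tJ: False
        have JA: "J \<subseteq> A" using JT tJ unfolding A_def N_def by auto
        have "0 \<le> w a * P a" unfolding a w_def using Msnn bnn l Pa N0 False by simp
        then show ?thesis using JA nB unfolding a by simp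
      qed
    qed
  qed
  also have "(\<Sum>a\<in>H. w a * P a) = Ms / N0 * (\<Sum>J\<in>{J. (s, J) \<in> H}. P (s, J))
      + lm * b / N0 * (\<Sum>J\<in>{J. (r, J) \<in> H}. P (r, J))"
    unfolding H_def hyperarcs_sum[OF sr finT] using sr by (simp add: w_def sum_distrib_left)
  also have "\<dots> \<le> Ms / N0 * Ps + lm * b / N0 * Pr"
  proof -
    have Msnn: "Ms \<ge> 0" unfolding Ms_def by (smt (verit) divide_nonneg_nonneg powr_ge_zero)
    have bnn: "b \<ge> 0" unfolding b_def by simp
    show ?thesis using Psum Msnn bnn l N0
      by (intro add_mono mult_left_mono) auto
  qed
  also have "\<dots> = (Ms * Ps + lm / dist r t powr \<alpha> * Pr) / N0"
    unfolding b_def by (simp add: add_divide_distrib divide_divide_eq_left mult.commute)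
  finally show ?thesis unfolding Ms_def .
qed

lemma lower_bound:
  fixes s r :: "'a::metric_space"
  assumes finT: "finite T" and sT: "s \<notin> T" and rN: "r \<notin> insert s T" and TsT: "Ts \<subseteq> T"
    and Trne: "T - Ts \<noteq> {}" and Tsd: "\<forall>u\<in>Ts. dist s u \<le> d1" and srd: "dist s r \<le> d1"
    and Trd: "\<forall>u\<in>T - Ts. dist r u \<le> d2" and Ps: "Ps \<ge> 0" and Pr: "Pr \<ge> 0" and N0: "N0 > 0"
    and \<alpha>: "\<alpha> \<ge> 0"
  shows "\<exists>P\<in>power_allocs s r T Ps Pr.
           min (Ps / (N0 * d1 powr \<alpha>)) (Pr / (N0 * d2 powr \<alpha>)) \<le> rate_sT s r T N0 \<alpha> P"
proof -
  define a1 where "a1 = (s, insert r Ts)"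
  define a2 where "a2 = (r, T - Ts)"
  define P0 where "P0 a = (if a = a1 then Ps else if a = a2 then Pr else 0)" for a
  define H where "H = hyperarcs s r T"
  define m where "m = min (Ps / (N0 * d1 powr \<alpha>)) (Pr / (N0 * d2 powr \<alpha>))"
  have sr: "s \<noteq> r" using rN by auto
  have a1H: "a1 \<in> H" and a2H: "a2 \<in> H" using TsT Trne unfolding a1_def a2_def H_def hyperarcs_def by auto
  have P0nn: "\<And>a. P0 a \<ge> 0" unfolding P0_def using Ps Pr by auto
  have f1: "finite {J. (s, J) \<in> H}"
    by (rule finite_subset[of _ "Pow (insert r T)"]) (auto simp: H_def hyperarcs_def finT)
  have f2: "finite {J. (r, J) \<in> H}"
    by (rule finite_subset[of _ "Pow (insert r T)"]) (auto simp: H_def hyperarcs_def finT)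
  have "(\<Sum>J\<in>{J. (s, J) \<in> H}. P0 (s, J)) = (\<Sum>J\<in>{J. (s, J) \<in> H}. if J = insert r Ts then Ps else 0)"
    by (rule sum.cong) (use sr in \<open>auto simp: P0_def a1_def a2_def\<close>)
  also have "\<dots> \<le> Ps" using f1 Ps by (simp add: sum.delta)
  finally have s1: "(\<Sum>J\<in>{J. (s, J) \<in> H}. P0 (s, J)) \<le> Ps" .
  have "(\<Sum>J\<in>{J. (r, J) \<in> H}. P0 (r, J)) = (\<Sum>J\<in>{J. (r, J) \<in> H}. if J = T - Ts then Pr else 0)"
    by (rule sum.cong) (use sr in \<open>auto simp: P0_def a1_def a2_def\<close>)
  also have "\<dots> \<le> Pr" using f2 Pr by (simp add: sum.delta)
  finally have s2: "(\<Sum>J\<in>{J. (r, J) \<in> H}. P0 (r, J)) \<le> Pr" .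
  have P0A: "P0 \<in> power_allocs s r T Ps Pr"
    unfolding power_allocs_def using P0nn s1 s2 unfolding H_def by auto
  have capnn: "\<And>a. a \<in> H \<Longrightarrow> capacity N0 \<alpha> P0 a \<ge> 0"
  proof -
    fix a assume aH: "a \<in> H"
    obtain i J where a: "a = (i, J)" by (cases a)
    have "J \<noteq> {}" "finite J"
      using aH finite_subset[of J "insert r T"] finT unfolding a H_def hyperarcs_def by auto
    then show "capacity N0 \<alpha> P0 a \<ge> 0" unfolding a using capacity_nonneg[of J P0 i N0 \<alpha>] P0nn N0 by auto
  qed
  have finTs: "finite Ts" using finite_subset[OF TsT finT] .
  have c1: "capacity N0 \<alpha> P0 a1 \<ge> Ps / (N0 * d1 powr \<alpha>)"
  proof -
    have "capacity N0 \<alpha> P0 (s, insert r Ts) \<ge> P0 (s, insert r Ts) / (N0 * d1 powr \<alpha>)"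
      by (rule capacity_ge) (use finTs Tsd srd sT rN TsT P0nn N0 \<alpha> in auto)
    then show ?thesis unfolding a1_def P0_def by simp
  qed
  have c2: "capacity N0 \<alpha> P0 a2 \<ge> Pr / (N0 * d2 powr \<alpha>)"
  proof -
    have "capacity N0 \<alpha> P0 (r, T - Ts) \<ge> P0 (r, T - Ts) / (N0 * d2 powr \<alpha>)"
      by (rule capacity_ge) (use finT Trne Trd rN P0nn N0 \<alpha> in auto)
    then show ?thesis unfolding a2_def P0_def a1_def using sr by simp
  qed
  have finH: "finite H" unfolding H_def using hyperarcs_finite[OF finT] .
  have cut: "m \<le> cut_value s r T N0 \<alpha> P0 S"
    if S: "s \<in> S" "u \<notin> S" "u \<in> T" for S u
  proof -
    define L where "L = {(i, J). (i, J) \<in> hyperarcs s r T \<and> i \<in> S \<and> \<not> J \<subseteq> S}"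
    have finL: "finite L" by (rule finite_subset[OF _ finH]) (auto simp: L_def H_def)
    have Lnn: "\<And>a. a \<in> L \<Longrightarrow> capacity N0 \<alpha> P0 a \<ge> 0" using capnn by (auto simp: L_def H_def)
    have mem: "capacity N0 \<alpha> P0 a \<le> cut_value s r T N0 \<alpha> P0 S" if "a \<in> L" for a
      unfolding cut_value_def L_def[symmetric] using that finL Lnn by (intro member_le_sum) auto
    have m1: "m \<le> capacity N0 \<alpha> P0 a1" using c1 unfolding m_def by linarith
    have m2: "m \<le> capacity N0 \<alpha> P0 a2" using c2 unfolding m_def by linarith
    show ?thesis
    proof (cases "u \<in> Ts \<or> r \<notin> S")
      case True
      then have "a1 \<in> L" using a1H S unfolding L_def a1_def H_def by auto
      then show ?thesis using mem m1 by (meson order_trans)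
    next
      case False
      then have "a2 \<in> L" using a2H S unfolding L_def a2_def H_def by auto
      then show ?thesis using mem m2 by (meson order_trans)
    qed
  qed
  have "m \<le> rate_sT s r T N0 \<alpha> P0"
  proof -
    have Tne: "T \<noteq> {}" using Trne by auto
    have "m \<le> rate_st s r T N0 \<alpha> P0 u" if u: "u \<in> T" for u
    proof -
      have fc: "finite {S. S \<subseteq> insert s (insert r T) \<and> s \<in> S \<and> u \<notin> S}"
        by (rule finite_subset[of _ "Pow (insert s (insert r T))"]) (auto simp: finT)
      have ne: "{s} \<in> {S. S \<subseteq> insert s (insert r T) \<and> s \<in> S \<and> u \<notin> S}" using u sT by auto
      show ?thesis unfolding rate_st_def using fc ne cut u by (subst Min_ge_iff) auto
    qed
    then show ?thesis unfolding rate_sT_def using finT Tne by (subst Min_ge_iff) auto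
  qed
  then show ?thesis using P0A unfolding m_def by blast
qed


lemma scale_ineq:
  fixes DA RA Ps lm \<gamma> G :: real
  assumes "DA > 0" "RA > 0" "Ps \<ge> 0" "1 + lm * \<gamma> / (RA / DA) \<le> G"
  shows "1 / DA * Ps + lm / RA * (\<gamma> * Ps) \<le> Ps * (G / DA)"
proof -
  have "Ps / DA * (1 + lm * \<gamma> / (RA / DA)) \<le> Ps / DA * G"
    using assms by (intro mult_left_mono) auto
  moreover have "Ps / DA * (1 + lm * \<gamma> / (RA / DA)) = 1 / DA * Ps + lm / RA * (\<gamma> * Ps)"
    using assms by (simp add: field_simps)
  ultimately show ?thesis by simp
qed

theorem lemma4:
  fixes s r0 :: "real ^ 2" and ts :: "(real ^ 2) list"
    and Ps N0 \<gamma> \<alpha> :: real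
  assumes ts_ne: "ts \<noteq> []"
    and distinct: "distinct (s # ts)"
    and ordered: "sorted (map (dist s) ts)"
    and Ps: "Ps > 0" and N0: "N0 > 0" and \<gamma>: "\<gamma> > 0" and \<alpha>: "\<alpha> \<ge> 2"
    and r0_seg: "r0 \<in> closed_segment s (last ts)"
    and r0_dist: "dist s r0 = dist s (last ts) / (1 + \<gamma> powr (1 / \<alpha>))"
    and r0_notin: "r0 \<notin> set ts"
    and cover: "set ts \<subseteq> cball s (dist s r0) \<union> cball r0 (dist r0 (last ts))"
  shows "\<forall>r. r \<notin> insert s (set ts) \<longrightarrow>
           opt_rate s (set ts) Ps (\<gamma> * Ps) N0 \<alpha> r \<le> opt_rate s (set ts) Ps (\<gamma> * Ps) N0 \<alpha> r0"
proof -
  define T where "T = set ts"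
  define t where "t = last ts"
  define D where "D = dist s t"
  define g where "g = \<gamma> powr (1 / \<alpha>)"
  define d0 where "d0 = dist s r0"
  define d2 where "d2 = dist r0 t"
  define Kc where "Kc = (1 + g) powr \<alpha> / D powr \<alpha>"
  have finT: "finite T" unfolding T_def by simp
  have tT: "t \<in> T" unfolding T_def t_def using ts_ne by simp
  have sT: "s \<notin> T" unfolding T_def using distinct by simp
  have Dpos: "D > 0" unfolding D_def using sT tT by auto
  have gpos: "g > 0" unfolding g_def using \<gamma> by simp
  have ga: "g powr \<alpha> = \<gamma>" unfolding g_def using \<gamma> \<alpha> by (simp add: powr_powr)
  have d0e: "d0 = D / (1 + g)" unfolding d0_def D_def g_def t_def using r0_dist .
  have d0pos: "d0 > 0" using d0e Dpos gpos by simp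
  have d0D: "d0 < D" using d0e Dpos gpos by (simp add: divide_less_eq)
  have seg: "d0 + d2 = D"
    using r0_seg unfolding d0_def d2_def D_def t_def between_mem_segment[symmetric] between by simp
  have d2e: "d2 = D * g / (1 + g)" using seg d0e gpos by (simp add: field_simps)
  have d2pos: "d2 > 0" using d2e Dpos gpos by simp
  have Kc1: "d0 powr \<alpha> = D powr \<alpha> / (1 + g) powr \<alpha>" using d0e Dpos gpos by (simp add: powr_divide)
  have Kc2: "d2 powr \<alpha> = D powr \<alpha> * \<gamma> / (1 + g) powr \<alpha>"
    using d2e Dpos gpos ga by (simp add: powr_divide powr_mult)
  have DA: "D powr \<alpha> > 0" using Dpos by simp
  have GA: "(1 + g) powr \<alpha> > 0" using gpos by simp
  have G1: "(1 + g) powr \<alpha> \<ge> 1" using gpos \<alpha> by (intro ge_one_powr_ge_zero) auto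
  have Kcpos: "Kc \<ge> 0" unfolding Kc_def using DA GA by simp
  have U: "rate_sT s r T N0 \<alpha> P \<le> Ps * Kc / N0"
    if rN: "r \<notin> insert s T" and P: "P \<in> power_allocs s r T Ps (\<gamma> * Ps)" for r P
  proof -
    have dsr: "dist s r > 0" using rN by auto
    have drt: "dist r t > 0" using rN tT by auto
    have tri: "D \<le> dist s r + dist r t" unfolding D_def by (rule dist_triangle)
    show ?thesis
    proof (cases "dist s r \<ge> d0")
      case True
      have b: "rate_sT s r T N0 \<alpha> P \<le> (max (1 / dist s t powr \<alpha>) ((1-0) / dist s r powr \<alpha>) * Ps
                 + 0 / dist r t powr \<alpha> * (\<gamma> * Ps)) / N0"
        by (rule upper_bound[OF finT tT rN sT N0 P]) auto
      have m1: "1 / dist s r powr \<alpha> \<le> Kc"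
      proof -
        have "d0 powr \<alpha> \<le> dist s r powr \<alpha>" using True d0pos \<alpha> by (intro powr_mono2) auto
        then have "1 / dist s r powr \<alpha> \<le> 1 / d0 powr \<alpha>" using d0pos dsr by (intro divide_left_mono mult_pos_pos) auto
        also have "\<dots> = Kc" unfolding Kc_def Kc1 by simp
        finally show ?thesis .
      qed
      have m2: "1 / dist s t powr \<alpha> \<le> Kc"
        unfolding Kc_def D_def[symmetric] using G1 DA by (intro divide_right_mono) auto
      have "max (1 / dist s t powr \<alpha>) ((1-0) / dist s r powr \<alpha>) * Ps \<le> Kc * Ps"
        using m1 m2 Ps by (intro mult_right_mono) auto
      then show ?thesis using b N0 by (simp add: divide_right_mono mult.commute order_trans)
    next
      case False
      define x where "x = dist s r / D"
      define lm where "lm = 1 - x powr \<alpha>"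
      have x0: "x > 0" unfolding x_def using dsr Dpos by simp
      have x1: "x * (1 + g) < 1" using False d0e Dpos gpos unfolding x_def
        by (simp add: field_simps)
      have xl1: "x < 1" using x1 gpos x0
        by (smt (verit, best) mult_less_cancel_left1)
      have xa: "x powr \<alpha> \<le> 1" using xl1 x0 \<alpha> by (simp add: powr_le1)
      have lm: "0 \<le> lm" "lm \<le> 1" unfolding lm_def using xa by auto
      have b: "rate_sT s r T N0 \<alpha> P \<le> (max (1 / dist s t powr \<alpha>) ((1-lm) / dist s r powr \<alpha>) * Ps
                 + lm / dist r t powr \<alpha> * (\<gamma> * Ps)) / N0"
        by (rule upper_bound[OF finT tT rN sT N0 P lm])
      have e1: "(1-lm) / dist s r powr \<alpha> = 1 / dist s t powr \<alpha>"
        unfolding lm_def x_def D_def using dsr Dpos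
        by (simp add: powr_divide D_def)
      have y: "1 + lm * g powr \<alpha> / (dist r t / D) powr \<alpha> \<le> (1 + g) powr \<alpha>"
      proof -
        have "1 - x = (D - dist s r) / D" unfolding x_def using Dpos by (simp add: diff_divide_distrib)
        also have "\<dots> \<le> dist r t / D" using tri Dpos by (intro divide_right_mono) auto
        finally have yx: "dist r t / D \<ge> 1 - x" .
        show ?thesis unfolding lm_def
          by (rule norm_ineq) (use \<alpha> x0 x1 gpos yx in auto)
      qed
      then have y': "1 + lm * \<gamma> / (dist r t powr \<alpha> / D powr \<alpha>) \<le> (1 + g) powr \<alpha>"
        using ga drt Dpos by (simp add: powr_divide)
      have "1 / D powr \<alpha> * Ps + lm / dist r t powr \<alpha> * (\<gamma> * Ps) \<le> Ps * Kc"
        unfolding Kc_def using scale_ineq[OF DA _ _ y'] drt Ps by simp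
      then show ?thesis using b e1 N0 unfolding D_def
        by (simp add: divide_right_mono order_trans)
    qed
  qed
  have ne: "(\<lambda>_. 0) \<in> power_allocs s r T Ps (\<gamma> * Ps)" for r
    unfolding power_allocs_def using Ps \<gamma> by simp
  have bdd: "bdd_above ((\<lambda>P. rate_sT s r T N0 \<alpha> P) ` power_allocs s r T Ps (\<gamma> * Ps))"
    if "r \<notin> insert s T" for r
    using U[OF that] by (intro bdd_aboveI2) auto
  have up: "opt_rate s T Ps (\<gamma> * Ps) N0 \<alpha> r \<le> Ps * Kc / N0" if "r \<notin> insert s T" for r
    unfolding opt_rate_def using ne U[OF that] by (intro cSUP_least) auto
  have r0N: "r0 \<notin> insert s T" using d0pos r0_notin unfolding d0_def T_def by auto
  have low: "Ps * Kc / N0 \<le> opt_rate s T Ps (\<gamma> * Ps) N0 \<alpha> r0"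
  proof -
    define Ts where "Ts = {u \<in> T. dist s u \<le> d0}"
    have "\<exists>P\<in>power_allocs s r0 T Ps (\<gamma> * Ps).
           min (Ps / (N0 * d0 powr \<alpha>)) (\<gamma> * Ps / (N0 * d2 powr \<alpha>)) \<le> rate_sT s r0 T N0 \<alpha> P"
    proof (rule lower_bound[OF finT sT r0N])
      show "Ts \<subseteq> T" unfolding Ts_def by auto
      show "T - Ts \<noteq> {}" using tT d0D unfolding Ts_def D_def by auto
      show "\<forall>u\<in>Ts. dist s u \<le> d0" unfolding Ts_def by auto
      show "dist s r0 \<le> d0" unfolding d0_def by simp
      show "\<forall>u\<in>T - Ts. dist r0 u \<le> d2"
        using cover unfolding Ts_def T_def d0_def d2_def t_def by auto
    qed (use Ps \<gamma> N0 \<alpha> in auto)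
    then obtain P where P: "P \<in> power_allocs s r0 T Ps (\<gamma> * Ps)"
      and m: "min (Ps / (N0 * d0 powr \<alpha>)) (\<gamma> * Ps / (N0 * d2 powr \<alpha>)) \<le> rate_sT s r0 T N0 \<alpha> P" by blast
    have e1: "Ps / (N0 * d0 powr \<alpha>) = Ps * Kc / N0"
      unfolding Kc1 Kc_def using DA GA N0 by (simp add: field_simps)
    have e2: "\<gamma> * Ps / (N0 * d2 powr \<alpha>) = Ps * Kc / N0"
      unfolding Kc2 Kc_def using DA GA N0 \<gamma> by (simp add: field_simps)
    have "Ps * Kc / N0 \<le> rate_sT s r0 T N0 \<alpha> P" using m e1 e2 by simp
    then show ?thesis unfolding opt_rate_def by (rule cSUP_upper2[OF bdd[OF r0N] P])
  qed
  show ?thesis using up low unfolding T_def by (meson order_trans)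
qed

end
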